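(* Let $G$ be a unit square graph and let $u,v\in V(G)$ be distinct non-adjacent vertices. Then $G[N(u)\cap N(v)]$ is a unit interval graph, and $N(u)\cap N(v)$ contains no independent set of size three.
   Context: A unit square graph is a graph $G$ admitting $f\colon V(G)\to\mathbb{R}^2$ with $vw\in E(G)$ iff $\|f(v)-f(w)\|_\infty\le1$ for distinct $v,w$. A unit interval graph is an intersection graph of unit-length intervals on the real line. *)

theory Defs
  imports Complex_Main
begin

definition simple_graph :: "'a set \<Rightarrow> ('a \<Rightarrow> 'a \<Rightarrow> bool) \<Rightarrow> bool" where
  "simple_graph V E \<longleftrightarrow>
     (\<forall>v w. E v w \<longrightarrow> v \<in> V \<and> w \<in> V) \<and>
     (\<forall>v w. E v w \<longrightarrow> E w v) \<and> (\<forall>v. \<not> E v v)"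

definition dist_inf :: "real \<times> real \<Rightarrow> real \<times> real \<Rightarrow> real" where
  "dist_inf p q = max \<bar>fst p - fst q\<bar> \<bar>snd p - snd q\<bar>"

definition unit_square_graph :: "'a set \<Rightarrow> ('a \<Rightarrow> 'a \<Rightarrow> bool) \<Rightarrow> bool" where
  "unit_square_graph V E \<longleftrightarrow> simple_graph V E \<and>
     (\<exists>f :: 'a \<Rightarrow> real \<times> real. \<forall>v\<in>V. \<forall>w\<in>V. v \<noteq> w \<longrightarrow>
        (E v w \<longleftrightarrow> dist_inf (f v) (f w) \<le> 1))"

definition unit_interval_graph :: "'a set \<Rightarrow> ('a \<Rightarrow> 'a \<Rightarrow> bool) \<Rightarrow> bool" where
  "unit_interval_graph V E \<longleftrightarrow> simple_graph V E \<and>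
     (\<exists>a :: 'a \<Rightarrow> real. \<forall>v\<in>V. \<forall>w\<in>V. v \<noteq> w \<longrightarrow>
        (E v w \<longleftrightarrow> {a v..a v + 1} \<inter> {a w..a w + 1} \<noteq> {}))"

definition nbhd :: "'a set \<Rightarrow> ('a \<Rightarrow> 'a \<Rightarrow> bool) \<Rightarrow> 'a \<Rightarrow> 'a set" where
  "nbhd V E u = {w \<in> V. E u w}"

definition induced_edges :: "('a \<Rightarrow> 'a \<Rightarrow> bool) \<Rightarrow> 'a set \<Rightarrow> 'a \<Rightarrow> 'a \<Rightarrow> bool" where
  "induced_edges E S = (\<lambda>x y. E x y \<and> x \<in> S \<and> y \<in> S)"

definition independent_set :: "('a \<Rightarrow> 'a \<Rightarrow> bool) \<Rightarrow> 'a set \<Rightarrow> bool" where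
  "independent_set E I \<longleftrightarrow> (\<forall>x\<in>I. \<forall>y\<in>I. \<not> E x y)"

end

theory Submission
  imports Defs
begin

lemma ivl_inter: "({a..a + 1} \<inter> {b..b + 1::real} \<noteq> {}) \<longleftrightarrow> \<bar>a - b\<bar> \<le> 1"
proof
  assume "{a..a + 1} \<inter> {b..b + 1::real} \<noteq> {}"
  then obtain x where "x \<in> {a..a+1}" "x \<in> {b..b+1}" by blast
  then show "\<bar>a - b\<bar> \<le> 1" by auto
next
  assume "\<bar>a - b\<bar> \<le> 1"
  then have "max a b \<in> {a..a + 1} \<inter> {b..b + 1}" by (auto simp: abs_if max_def split: if_splits)
  then show "{a..a + 1} \<inter> {b..b + 1::real} \<noteq> {}" by blast
qed

lemma generic:
  fixes X Y :: "'a \<Rightarrow> real"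
  assumes sg: "simple_graph V E"
    and H: "\<forall>v\<in>V. \<forall>w\<in>V. v \<noteq> w \<longrightarrow> (E v w \<longleftrightarrow> max \<bar>X v - X w\<bar> \<bar>Y v - Y w\<bar> \<le> 1)"
    and uV: "u \<in> V" and vV: "v \<in> V" and far: "\<bar>X u - X v\<bar> > 1"
  shows "unit_interval_graph (nbhd V E u \<inter> nbhd V E v)
           (induced_edges E (nbhd V E u \<inter> nbhd V E v))
         \<and> \<not> (\<exists>I \<subseteq> nbhd V E u \<inter> nbhd V E v. card I = 3 \<and> independent_set E I)"
proof -
  define S where "S = nbhd V E u \<inter> nbhd V E v"
  have pt: "w \<in> V \<and> \<bar>X w - X u\<bar> \<le> 1 \<and> \<bar>X w - X v\<bar> \<le> 1 \<and> \<bar>Y w - Y u\<bar> \<le> 1 \<and> \<bar>Y w - Y v\<bar> \<le> 1"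
    if "w \<in> S" for w
  proof -
    have w: "w \<in> V" "E u w" "E v w" using that by (auto simp: S_def nbhd_def)
    have "w \<noteq> u" "w \<noteq> v" using w sg by (auto simp: simple_graph_def)
    then show ?thesis using w H uV vV by (auto simp: abs_minus_commute)
  qed
  have xclose: "\<bar>X w - X w'\<bar> \<le> 1" if "w \<in> S" "w' \<in> S" for w w'
    using pt[OF that(1)] pt[OF that(2)] far by (auto simp: abs_if split: if_splits)
  have edge: "E w w' \<longleftrightarrow> \<bar>Y w - Y w'\<bar> \<le> 1" if "w \<in> S" "w' \<in> S" "w \<noteq> w'" for w w'
    using H pt[OF that(1)] pt[OF that(2)] xclose[OF that(1,2)] that(3) by auto
  have part1: "unit_interval_graph S (induced_edges E S)"
    unfolding unit_interval_graph_def
  proof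
    show "simple_graph S (induced_edges E S)"
      using sg by (auto simp: simple_graph_def induced_edges_def)
    show "\<exists>a :: 'a \<Rightarrow> real. \<forall>v\<in>S. \<forall>w\<in>S. v \<noteq> w \<longrightarrow>
        (induced_edges E S v w \<longleftrightarrow> {a v..a v + 1} \<inter> {a w..a w + 1} \<noteq> {})"
      by (rule exI[of _ Y]) (auto simp: induced_edges_def ivl_inter edge)
  qed
  have part2: "\<not> (\<exists>I \<subseteq> S. card I = 3 \<and> independent_set E I)"
  proof
    assume "\<exists>I \<subseteq> S. card I = 3 \<and> independent_set E I"
    then obtain I where I: "I \<subseteq> S" "card I = 3" "independent_set E I" by blast
    then obtain x y z where xyz: "I = {x,y,z}" "x \<noteq> y" "y \<noteq> z" "x \<noteq> z"
      by (auto simp: card_3_iff)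
    have s: "x \<in> S" "y \<in> S" "z \<in> S" using I xyz by auto
    have "\<not> E x y" "\<not> E y z" "\<not> E x z" using I(3) xyz by (auto simp: independent_set_def)
    then have "\<bar>Y x - Y y\<bar> > 1" "\<bar>Y y - Y z\<bar> > 1" "\<bar>Y x - Y z\<bar> > 1"
      using edge s xyz by auto
    moreover have "\<bar>Y x - Y u\<bar> \<le> 1" "\<bar>Y y - Y u\<bar> \<le> 1" "\<bar>Y z - Y u\<bar> \<le> 1"
      using pt s by auto
    ultimately show False by (auto simp: abs_if split: if_splits)
  qed
  show ?thesis using part1 part2 by (simp add: S_def)
qed

theorem mainTheorem6:
  fixes V :: "'a set" and E :: "'a \<Rightarrow> 'a \<Rightarrow> bool" and u v :: 'a
  assumes "finite V"
    and "unit_square_graph V E"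
    and "u \<in> V" and "v \<in> V" and "u \<noteq> v" and "\<not> E u v"
  shows "unit_interval_graph (nbhd V E u \<inter> nbhd V E v)
           (induced_edges E (nbhd V E u \<inter> nbhd V E v))
         \<and> \<not> (\<exists>I \<subseteq> nbhd V E u \<inter> nbhd V E v. card I = 3 \<and> independent_set E I)"
proof -
  obtain f :: "'a \<Rightarrow> real \<times> real" where sg: "simple_graph V E" and
    H: "\<forall>v\<in>V. \<forall>w\<in>V. v \<noteq> w \<longrightarrow> (E v w \<longleftrightarrow> dist_inf (f v) (f w) \<le> 1)"
    using assms(2) unfolding unit_square_graph_def by blast
  have "dist_inf (f u) (f v) > 1" using H assms(3-6) by force
  then have c: "\<bar>fst (f u) - fst (f v)\<bar> > 1 \<or> \<bar>snd (f u) - snd (f v)\<bar> > 1"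
    by (auto simp: dist_inf_def)
  show ?thesis
  proof (cases "\<bar>fst (f u) - fst (f v)\<bar> > 1")
    case True
    show ?thesis
      by (rule generic[OF sg _ assms(3,4), of "\<lambda>w. fst (f w)" "\<lambda>w. snd (f w)"])
        (use H True in \<open>auto simp: dist_inf_def\<close>)
  next
    case False
    with c have c2: "\<bar>snd (f u) - snd (f v)\<bar> > 1" by simp
    show ?thesis
      by (rule generic[OF sg _ assms(3,4), of "\<lambda>w. snd (f w)" "\<lambda>w. fst (f w)"])
        (use H c2 in \<open>auto simp: dist_inf_def max.commute\<close>)
  qed
qed

end
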